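(* Let $\Gamma=(V,E)$ be a graph, for each $v\in V$ let $C_v$ be a left LCM monoid, and let $C=\Gamma_{v\in V}C_v$. Then for each $v\in V$, the inverse hull $IH^0(C_v)$ embeds in $IH^0(C)$, i.e. there is an injective monoid homomorphism $IH^0(C_v)\to IH^0(C)$.
   Context: A graph $\Gamma=(V,E)$ has vertex set $V$ and irreflexive symmetric edge relation $E$. The graph product $\Gamma_{v\in V}C_v$ of pairwise disjoint monoids $C_v$ is the quotient of their free product by the congruence generated by all $(mn,nm)$ with $m\in C_u$, $n\in C_v$, $(u,v)\in E$. A left LCM monoid is a right cancellative monoid in which the intersection of any two principal left ideals is empty or principal. For a right cancellative monoid $D$ and $a\in D$, $\rho_a:D\to D$, $x\mapsto xa$, is regarded as an element of the symmetric inverse monoid of all partial bijections of $D$; the inverse hull $IH(D)$ is the inverse submonoid generated by all $\rho_a$, and $IH^0(D)=IH(D)\cup\{\emptyset\}$ with the empty map as zero. *)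

theory Defs
  imports "HOL-Algebra.Group"
begin

definition right_cancellative :: "('a, 'm) monoid_scheme \<Rightarrow> bool" where
  "right_cancellative D \<longleftrightarrow>
     (\<forall>x\<in>carrier D. \<forall>y\<in>carrier D. \<forall>a\<in>carrier D. x \<otimes>\<^bsub>D\<^esub> a = y \<otimes>\<^bsub>D\<^esub> a \<longrightarrow> x = y)"

definition principal_left_ideal :: "('a, 'm) monoid_scheme \<Rightarrow> 'a \<Rightarrow> 'a set" where
  "principal_left_ideal D a = {b \<otimes>\<^bsub>D\<^esub> a | b. b \<in> carrier D}"

definition left_LCM_monoid :: "('a, 'm) monoid_scheme \<Rightarrow> bool" where
  "left_LCM_monoid D \<longleftrightarrow> monoid D \<and> right_cancellative D \<and>
     (\<forall>x\<in>carrier D. \<forall>y\<in>carrier D.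
        principal_left_ideal D x \<inter> principal_left_ideal D y = {} \<or>
        (\<exists>z\<in>carrier D. principal_left_ideal D x \<inter> principal_left_ideal D y
                          = principal_left_ideal D z))"

text \<open>Partial bijections of the carrier are represented as partial maps.
  rho a is right multiplication by a, defined on all of the carrier.\<close>

definition rho :: "('a, 'm) monoid_scheme \<Rightarrow> 'a \<Rightarrow> ('a \<rightharpoonup> 'a)" where
  "rho D a = (\<lambda>x. if x \<in> carrier D then Some (x \<otimes>\<^bsub>D\<^esub> a) else None)"

definition rho_inv :: "('a, 'm) monoid_scheme \<Rightarrow> 'a \<Rightarrow> ('a \<rightharpoonup> 'a)" where
  "rho_inv D a = (\<lambda>y. if (\<exists>x\<in>carrier D. x \<otimes>\<^bsub>D\<^esub> a = y)
                       then Some (THE x. x \<in> carrier D \<and> x \<otimes>\<^bsub>D\<^esub> a = y) else None)"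

definition pid :: "('a, 'm) monoid_scheme \<Rightarrow> ('a \<rightharpoonup> 'a)" where
  "pid D = (\<lambda>x. if x \<in> carrier D then Some x else None)"

text \<open>Product in the symmetric inverse monoid: f then g (left-to-right
  composition, so that rho a * rho b = rho (a b)).\<close>

definition pmult :: "('a \<rightharpoonup> 'a) \<Rightarrow> ('a \<rightharpoonup> 'a) \<Rightarrow> ('a \<rightharpoonup> 'a)" where
  "pmult f g = g \<circ>\<^sub>m f"

inductive_set IH :: "('a, 'm) monoid_scheme \<Rightarrow> ('a \<rightharpoonup> 'a) set"
  for D where
  IH_one: "pid D \<in> IH D"
| IH_rho: "\<lbrakk>f \<in> IH D; a \<in> carrier D\<rbrakk> \<Longrightarrow> pmult f (rho D a) \<in> IH D"
| IH_rho_inv: "\<lbrakk>f \<in> IH D; a \<in> carrier D\<rbrakk> \<Longrightarrow> pmult f (rho_inv D a) \<in> IH D"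

definition IH0 :: "('a, 'm) monoid_scheme \<Rightarrow> ('a \<rightharpoonup> 'a) monoid" where
  "IH0 D = \<lparr>carrier = IH D \<union> {Map.empty}, mult = pmult, one = pid D\<rparr>"

text \<open>Pairwise disjointness of the C v is realised by tagging each element
  with its vertex.  Words are lists of letters (v, a) with v in V and a in C v.\<close>

definition gp_words :: "'v set \<Rightarrow> ('v \<Rightarrow> ('a, 'm) monoid_scheme) \<Rightarrow> ('v \<times> 'a) list set" where
  "gp_words V C = lists (SIGMA v:V. carrier (C v))"

inductive gp_rel :: "'v set \<Rightarrow> ('v \<Rightarrow> 'v \<Rightarrow> bool) \<Rightarrow> ('v \<Rightarrow> ('a, 'm) monoid_scheme)
                     \<Rightarrow> ('v \<times> 'a) list \<Rightarrow> ('v \<times> 'a) list \<Rightarrow> bool"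
  for V E C where
  gp_one: "v \<in> V \<Longrightarrow> gp_rel V E C [(v, \<one>\<^bsub>C v\<^esub>)] []"
| gp_mult: "\<lbrakk>v \<in> V; a \<in> carrier (C v); b \<in> carrier (C v)\<rbrakk> \<Longrightarrow>
            gp_rel V E C [(v, a), (v, b)] [(v, a \<otimes>\<^bsub>C v\<^esub> b)]"
| gp_comm: "\<lbrakk>u \<in> V; v \<in> V; E u v; a \<in> carrier (C u); b \<in> carrier (C v)\<rbrakk> \<Longrightarrow>
            gp_rel V E C [(u, a), (v, b)] [(v, b), (u, a)]"
| gp_refl: "w \<in> gp_words V C \<Longrightarrow> gp_rel V E C w w"
| gp_sym: "gp_rel V E C w w' \<Longrightarrow> gp_rel V E C w' w"
| gp_trans: "\<lbrakk>gp_rel V E C w w'; gp_rel V E C w' w''\<rbrakk> \<Longrightarrow> gp_rel V E C w w''"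
| gp_ctxt: "\<lbrakk>gp_rel V E C w w'; xs \<in> gp_words V C; ys \<in> gp_words V C\<rbrakk> \<Longrightarrow>
            gp_rel V E C (xs @ w @ ys) (xs @ w' @ ys)"

definition gp_class :: "'v set \<Rightarrow> ('v \<Rightarrow> 'v \<Rightarrow> bool) \<Rightarrow> ('v \<Rightarrow> ('a, 'm) monoid_scheme)
                        \<Rightarrow> ('v \<times> 'a) list \<Rightarrow> ('v \<times> 'a) list set" where
  "gp_class V E C w = {w'. gp_rel V E C w w'}"

definition graph_product :: "'v set \<Rightarrow> ('v \<Rightarrow> 'v \<Rightarrow> bool) \<Rightarrow> ('v \<Rightarrow> ('a, 'm) monoid_scheme)
                             \<Rightarrow> ('v \<times> 'a) list set monoid" where
  "graph_product V E C =
     \<lparr>carrier = gp_class V E C ` gp_words V C,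
      mult = (\<lambda>X Y. \<Union>x\<in>X. \<Union>y\<in>Y. gp_class V E C (x @ y)),
      one = gp_class V E C []\<rparr>"

end

theory Submission
  imports Defs
begin


definition peq :: "('v \<Rightarrow> 'v \<Rightarrow> bool) \<Rightarrow> ('v \<times> 'a) list \<Rightarrow> ('v \<times> 'a) list \<Rightarrow> bool" where
 "peq E xs ys \<longleftrightarrow> (\<forall>u w. (u = w \<or> \<not> E u w) \<longrightarrow>
     filter (\<lambda>z. fst z = u \<or> fst z = w) xs = filter (\<lambda>z. fst z = u \<or> fst z = w) ys)"

lemma peq_refl[simp]: "peq E xs xs" by (simp add: peq_def)
lemma peq_sym: "peq E xs ys \<Longrightarrow> peq E ys xs" by (simp add: peq_def)
lemma peq_trans: "peq E xs ys \<Longrightarrow> peq E ys zs \<Longrightarrow> peq E xs zs" by (simp add: peq_def)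
lemma peq_app: "peq E a a' \<Longrightarrow> peq E b b' \<Longrightarrow> peq E (a@b) (a'@b')" by (simp add: peq_def)
lemma peq_rev: "peq E xs ys \<Longrightarrow> peq E (rev xs) (rev ys)"
  unfolding peq_def by (simp add: rev_filter[symmetric])
lemma peq_rcancel: "peq E (a@[x]) (b@[x]) \<Longrightarrow> peq E a b"
  unfolding peq_def by (auto split: if_splits)
lemma peq_set: fixes a b :: "('v \<times> 'x) list" shows "peq E a b \<Longrightarrow> set a = set b"
proof -
  assume h: "peq E a b"
  have "\<And>x. x \<in> set a \<longleftrightarrow> x \<in> set b"
  proof -
    fix x :: "'v \<times> 'x"
    have "filter (\<lambda>z. fst z = fst x \<or> fst z = fst x) a = filter (\<lambda>z. fst z = fst x \<or> fst z = fst x) b"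
      using h unfolding peq_def by blast
    then have "set (filter (\<lambda>z. fst z = fst x \<or> fst z = fst x) a) = set (filter (\<lambda>z. fst z = fst x \<or> fst z = fst x) b)" by simp
    then show "x \<in> set a \<longleftrightarrow> x \<in> set b" by auto
  qed
  then show ?thesis by blast
qed

lemma peq_Nil: "peq E [] ys \<Longrightarrow> ys = []"
  using peq_set by fastforce

lemma peq_mv:
  assumes irr: "\<And>u. \<not> E u u" and sy: "\<And>u w. E u w \<Longrightarrow> E w u"
    and b: "\<forall>y\<in>set b. E (fst x) (fst y)"
  shows "peq E (a@[x]@b) (a@b@[x])"
  unfolding peq_def
proof (intro allI impI)
  fix u w assume d: "u = w \<or> \<not> E u w"
  let ?Q = "\<lambda>z. fst z = u \<or> fst z = w"
  show "filter ?Q (a@[x]@b) = filter ?Q (a@b@[x])"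
  proof (cases "?Q x")
    case True
    have "filter ?Q b = []"
    proof (rule filter_False, rule ballI)
      fix y assume y: "y \<in> set b"
      have e: "E (fst x) (fst y)" using b y by blast
      show "\<not> ?Q y" using True d e irr sy by metis
    qed
    then show ?thesis by simp
  next
    case False then show ?thesis by simp
  qed
qed

lemma split_last_filter:
  "filter P z = f @ [x] \<Longrightarrow> \<exists>a b. z = a@[x]@b \<and> (\<forall>y\<in>set b. \<not> P y) \<and> filter P a = f"
proof (induction z arbitrary: f rule: rev_induct)
  case Nil then show ?case by simp
next
  case (snoc y z)
  show ?case
  proof (cases "P y")
    case True
    then show ?thesis using snoc.prems by (intro exI[of _ z] exI[of _ "[]"]) auto
  next
    case False
    then have "filter P z = f @ [x]" using snoc.prems by simp
    from snoc.IH[OF this] obtain a b where "z = a@[x]@b" "\<forall>y\<in>set b. \<not> P y" "filter P a = f" by blast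
    then show ?thesis using False by (intro exI[of _ a] exI[of _ "b@[y]"]) auto
  qed
qed

lemma last_analysis:
  assumes irr: "\<And>u. \<not> E u u" and sy: "\<And>u w. E u w \<Longrightarrow> E w u"
    and h: "peq E (w@[x]) z"
  shows "\<exists>a b. z = a@[x]@b \<and> (\<forall>y\<in>set b. E (fst x) (fst y)) \<and> peq E w (a@b)"
proof -
  let ?P = "\<lambda>y. fst y = fst x \<or> fst y = fst x"
  have "filter ?P (w@[x]) = filter ?P z" using h unfolding peq_def by blast
  then have "filter ?P z = filter ?P w @ [x]" by simp
  from split_last_filter[OF this] obtain a b where z: "z = a@[x]@b" and nb: "\<forall>y\<in>set b. \<not> ?P y" by blast
  have adj: "\<forall>y\<in>set b. E (fst x) (fst y)"
  proof (rule ballI, rule ccontr)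
    fix y assume y: "y \<in> set b" and ne: "\<not> E (fst x) (fst y)"
    let ?Q = "\<lambda>z. fst z = fst x \<or> fst z = fst y"
    have eq: "filter ?Q (w@[x]) = filter ?Q z" using h ne unfolding peq_def by blast
    have "filter ?Q b \<noteq> []" using y by (metis (mono_tags, lifting) filter_empty_conv)
    then have "last (filter ?Q b) \<in> set b" by (metis filter_is_subset last_in_set subsetD)
    moreover have "last (filter ?Q z) = last (filter ?Q b)" using z \<open>filter ?Q b \<noteq> []\<close> by simp
    ultimately have "last (filter ?Q z) \<in> set b" by simp
    moreover have "last (filter ?Q z) = x" by (simp flip: eq)
    ultimately have "x \<in> set b" by simp
    then show False using nb by blast
  qed
  have "peq E z (a@b@[x])" using z peq_mv[OF irr sy adj] by simp
  then have "peq E (w@[x]) (a@b@[x])" using h peq_trans by blast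
  then have "peq E w (a@b)" using peq_rcancel by (metis append_assoc)
  then show ?thesis using z adj by blast
qed




fun bad :: "('v \<times> 'a) list \<Rightarrow> bool" where
  "bad (x#y#r) = (fst x = fst y \<or> bad (y#r))"
| "bad _ = False"

lemma bad_append: "bad (a@b) \<longleftrightarrow> bad a \<or> bad b \<or> (a \<noteq> [] \<and> b \<noteq> [] \<and> fst (last a) = fst (hd b))"
proof (induction a rule: bad.induct)
  case (1 x y r) then show ?case by auto
next
  case ("2_1") then show ?case by simp
next
  case ("2_2" x) then show ?case by (cases b) auto
qed

locale gpc =
  fixes V :: "'v set" and E :: "'v \<Rightarrow> 'v \<Rightarrow> bool" and C :: "'v \<Rightarrow> ('a, 'm) monoid_scheme"
  assumes irr: "\<And>u. \<not> E u u" and sy: "\<And>u w. E u w \<Longrightarrow> E w u"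
    and mon: "\<And>u. u \<in> V \<Longrightarrow> monoid (C u)"
begin

abbreviation W where "W \<equiv> gp_words V C"
abbreviation R where "R \<equiv> gp_rel V E C"

lemma W_iff: "w \<in> W \<longleftrightarrow> (\<forall>x\<in>set w. fst x \<in> V \<and> snd x \<in> carrier (C (fst x)))"
  unfolding gp_words_def by auto

lemma W_app[simp]: "a@b \<in> W \<longleftrightarrow> a \<in> W \<and> b \<in> W" unfolding gp_words_def by auto
lemma W_Cons[simp]: "x#b \<in> W \<longleftrightarrow> fst x \<in> V \<and> snd x \<in> carrier (C (fst x)) \<and> b \<in> W"
  unfolding gp_words_def by (cases x) auto
lemma W_Nil[simp]: "[] \<in> W" unfolding gp_words_def by auto

lemma R_words: "R w w' \<Longrightarrow> w \<in> W \<and> w' \<in> W"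
proof (induction rule: gp_rel.induct)
  case (gp_one v) then show ?case using monoid.one_closed[OF mon] by simp
next
  case (gp_mult v a b) then show ?case using monoid.m_closed[OF mon] by simp
qed auto

lemma R_refl: "w \<in> W \<Longrightarrow> R w w" by (rule gp_rel.gp_refl)
lemma R_sym: "R w w' \<Longrightarrow> R w' w" by (rule gp_rel.gp_sym)
lemma R_trans: "R w w' \<Longrightarrow> R w' w'' \<Longrightarrow> R w w''" by (rule gp_rel.gp_trans)
lemma R_ctxt: "R w w' \<Longrightarrow> xs \<in> W \<Longrightarrow> ys \<in> W \<Longrightarrow> R (xs@w@ys) (xs@w'@ys)"
  by (rule gp_rel.gp_ctxt)
lemma R_left: "R w w' \<Longrightarrow> xs \<in> W \<Longrightarrow> R (xs@w) (xs@w')"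
  using R_ctxt[of w w' xs "[]"] by simp
lemma R_right: "R w w' \<Longrightarrow> ys \<in> W \<Longrightarrow> R (w@ys) (w'@ys)"
  using R_ctxt[of w w' "[]" ys] by simp
lemma R_app: "R a a' \<Longrightarrow> R b b' \<Longrightarrow> R (a@b) (a'@b')"
proof -
  assume a: "R a a'" and b: "R b b'"
  have "R (a@b) (a'@b)" using R_right[OF a] R_words[OF b] by blast
  moreover have "R (a'@b) (a'@b')" using R_left[OF b] R_words[OF a] by blast
  ultimately show ?thesis by (rule R_trans)
qed

lemma R_comm2: "x \<in> (SIGMA v:V. carrier (C v)) \<Longrightarrow> y \<in> (SIGMA v:V. carrier (C v)) \<Longrightarrow> E (fst x) (fst y)
   \<Longrightarrow> R [x,y] [y,x]"
  using gp_rel.gp_comm[of "fst x" V "fst y" E "snd x" C "snd y"] by (cases x, cases y) auto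

lemma R_swap: "a@[x]@b \<in> W \<Longrightarrow> \<forall>y\<in>set a. E (fst x) (fst y) \<Longrightarrow> R (a@[x]@b) (x#a@b)"
proof (induction a)
  case Nil then show ?case by (simp add: R_refl)
next
  case (Cons y a)
  have "y#a@[x]@b \<in> W" using Cons.prems(1) by simp
  then have "x \<in> set (y#a@[x]@b)" "y \<in> set (y#a@[x]@b)" "y#a@[x]@b \<in> lists (SIGMA v:V. carrier (C v))"
    unfolding gp_words_def by auto
  then have xw: "x \<in> (SIGMA v:V. carrier (C v))" "y \<in> (SIGMA v:V. carrier (C v))"
    by (meson in_listsD)+
  have "R (a@[x]@b) (x#a@b)" using Cons by simp
  then have 1: "R (y#a@[x]@b) (y#x#a@b)" using R_left[of _ _ "[y]"] Cons.prems by auto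
  have "R [y,x] [x,y]" using R_comm2[OF xw(2) xw(1)] Cons.prems(2) sy by simp
  moreover have "a@b \<in> W" using Cons.prems by simp
  ultimately have "R ([y,x]@(a@b)) ([x,y]@(a@b))" by (rule R_right)
  then show ?case using 1 R_trans by auto
qed

lemma first_analysis:
  assumes h: "peq E (x#w) z"
  shows "\<exists>a b. z = a@[x]@b \<and> (\<forall>y\<in>set a. E (fst x) (fst y)) \<and> peq E w (a@b)"
proof -
  have "peq E (rev w @ [x]) (rev z)" using peq_rev[OF h] by simp
  from last_analysis[OF irr sy this] obtain a b where
    rz: "rev z = a@[x]@b" and bb: "\<forall>y\<in>set b. E (fst x) (fst y)" and pp: "peq E (rev w) (a@b)" by blast
  have "z = rev (rev z)" by simp
  also have "\<dots> = rev b @ [x] @ rev a" unfolding rz by simp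
  finally have z1: "z = rev b @ [x] @ rev a" .
  have "peq E (rev (rev w)) (rev (a@b))" by (rule peq_rev[OF pp])
  then have "peq E w (rev b @ rev a)" by simp
  then show ?thesis using bb z1 by (intro exI[of _ "rev b"] exI[of _ "rev a"]) simp
qed

lemma peq_R: "peq E xs ys \<Longrightarrow> xs \<in> W \<Longrightarrow> ys \<in> W \<Longrightarrow> R xs ys"
proof (induction xs arbitrary: ys)
  case Nil then show ?case using peq_Nil R_refl by blast
next
  case (Cons x xs)
  from first_analysis[OF Cons.prems(1)] obtain a b where
    z: "ys = a@[x]@b" "\<forall>y\<in>set a. E (fst x) (fst y)" "peq E xs (a@b)" by blast
  have "R xs (a@b)" using Cons z by simp
  then have 1: "R (x#xs) (x#a@b)" using R_left[of _ _ "[x]"] Cons.prems by simp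
  have "R ys (x#a@b)" using R_swap z Cons.prems by simp
  then show ?case using 1 R_trans R_sym by blast
qed

end



context gpc begin

definition ul :: "'v \<Rightarrow> 'a \<Rightarrow> ('v \<times> 'a) list" where
  "ul u c = (if c = \<one>\<^bsub>C u\<^esub> then [] else [(u,c)])"

definition tm :: "'v \<Rightarrow> ('v \<times> 'a) list \<Rightarrow> bool" where
  "tm u w \<longleftrightarrow> (\<exists>p c. peq E w (p@[(u,c)]))"

definition red :: "('v \<times> 'a) list \<Rightarrow> bool" where
  "red w \<longleftrightarrow> w \<in> W \<and> (\<forall>x\<in>set w. snd x \<noteq> \<one>\<^bsub>C (fst x)\<^esub>) \<and> (\<forall>z. peq E w z \<longrightarrow> \<not> bad z)"

definition act :: "('v \<times> 'a) list \<Rightarrow> ('v \<times> 'a) \<Rightarrow> ('v \<times> 'a) list" where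
  "act r x = (if tm (fst x) r then
      (let pc = SOME pc. peq E r (fst pc @ [(fst x, snd pc)]) in fst pc @ ul (fst x) (snd pc \<otimes>\<^bsub>C (fst x)\<^esub> snd x))
     else r @ ul (fst x) (snd x))"

lemma tm_peq: "peq E r r' \<Longrightarrow> tm u r \<Longrightarrow> tm u r'"
  unfolding tm_def using peq_sym peq_trans by blast

lemma uniq: assumes "peq E (p@[(u,c)]) (p'@[(u,c')])" shows "c = c' \<and> peq E p p'"
proof -
  from last_analysis[OF irr sy assms] obtain a b where
    e: "p'@[(u,c')] = a@[(u,c)]@b" and bb: "\<forall>y\<in>set b. E (fst (u,c)) (fst y)" and pp: "peq E p (a@b)" by blast
  have "b = []"
  proof (rule ccontr)
    assume "b \<noteq> []"
    have "last (p'@[(u,c')]) = last ((a@[(u,c)])@b)" using e by simp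
    then have "last b = (u,c')" using \<open>b \<noteq> []\<close> by simp
    then have "(u,c') \<in> set b" using \<open>b \<noteq> []\<close> last_in_set by fastforce
    then show False using bb irr by fastforce
  qed
  then show ?thesis using e pp by auto
qed

lemma red_peq: "red w \<Longrightarrow> peq E w w' \<Longrightarrow> red w'"
proof -
  assume r: "red w" and p: "peq E w w'"
  have s: "set w = set w'" by (rule peq_set[OF p])
  have "w' \<in> W" using r s unfolding red_def W_iff by auto
  moreover have "\<forall>x\<in>set w'. snd x \<noteq> \<one>\<^bsub>C (fst x)\<^esub>" using r s unfolding red_def by auto
  moreover have "\<forall>z. peq E w' z \<longrightarrow> \<not> bad z" using r p peq_trans unfolding red_def by blast
  ultimately show ?thesis unfolding red_def by blast
qed

lemma red_prefix: assumes r: "red (w@s)" shows "red w"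
proof -
  have a: "w@s \<in> W" "\<forall>x\<in>set (w@s). snd x \<noteq> \<one>\<^bsub>C (fst x)\<^esub>" "\<forall>z. peq E (w@s) z \<longrightarrow> \<not> bad z"
    using r unfolding red_def by auto
  have "\<forall>z. peq E w z \<longrightarrow> \<not> bad z"
  proof (intro allI impI)
    fix z assume "peq E w z"
    then have "peq E (w@s) (z@s)" using peq_app peq_refl by blast
    then have "\<not> bad (z@s)" using a by blast
    then show "\<not> bad z" using bad_append by blast
  qed
  moreover have "w \<in> W" using a by simp
  moreover have "\<forall>x\<in>set w. snd x \<noteq> \<one>\<^bsub>C (fst x)\<^esub>" using a by simp
  ultimately show ?thesis unfolding red_def by blast
qed

lemma red_snoc:
  assumes r: "red w" and u: "u \<in> V" and a: "a \<in> carrier (C u)" "a \<noteq> \<one>\<^bsub>C u\<^esub>" and nt: "\<not> tm u w"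
  shows "red (w@[(u,a)])"
  unfolding red_def
proof (intro conjI allI impI)
  show "w @ [(u, a)] \<in> W" using r u a unfolding red_def by simp
  show "\<forall>x\<in>set (w @ [(u, a)]). snd x \<noteq> \<one>\<^bsub>C (fst x)\<^esub>" using r a unfolding red_def by auto
  fix z assume "peq E (w @ [(u, a)]) z"
  from last_analysis[OF irr sy this] obtain A B where
    z: "z = A@[(u,a)]@B" and bb: "\<forall>y\<in>set B. E u (fst y)" and pp: "peq E w (A@B)" by auto
  have nb: "\<not> bad (A@B)" using r pp unfolding red_def by blast
  show "\<not> bad z"
  proof
    assume "bad z"
    then have "bad A \<or> bad ([(u,a)]@B) \<or> (A \<noteq> [] \<and> fst (last A) = u)"
      unfolding z bad_append by auto
    moreover have "bad ([(u,a)]@B) \<longleftrightarrow> bad B \<or> (B \<noteq> [] \<and> u = fst (hd B))"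
      using bad_append[of "[(u,a)]" B] by auto
    moreover have "B \<noteq> [] \<Longrightarrow> u \<noteq> fst (hd B)"
    proof -
      assume "B \<noteq> []"
      then have "hd B \<in> set B" by simp
      then have "E u (fst (hd B))" using bb by blast
      then show "u \<noteq> fst (hd B)" using irr by auto
    qed
    moreover have "bad A \<Longrightarrow> False" using nb bad_append by blast
    moreover have "bad B \<Longrightarrow> False" using nb bad_append by blast
    moreover have "A \<noteq> [] \<and> fst (last A) = u \<Longrightarrow> False"
    proof -
      assume h: "A \<noteq> [] \<and> fst (last A) = u"
      define A' where "A' = butlast A"
      define y where "y = last A"
      have A: "A = A'@[y]" using h unfolding A'_def y_def by simp
      have fy: "fst y = u" using h A by simp
      have "peq E (A'@[y]@B) (A'@B@[y])" by (rule peq_mv[OF irr sy]) (use bb fy in auto)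
      then have "peq E w ((A'@B)@[y])" using pp A peq_trans by simp
      moreover have "y = (u, snd y)" using fy by (cases y) simp
      ultimately have "peq E w ((A'@B)@[(u, snd y)])" by simp
      then show False using nt unfolding tm_def by blast
    qed
    ultimately show False by blast
  qed
qed

end



context gpc begin

lemma ul_one[simp]: "ul u \<one>\<^bsub>C u\<^esub> = []" by (simp add: ul_def)
lemma ul_ne: "c \<noteq> \<one>\<^bsub>C u\<^esub> \<Longrightarrow> ul u c = [(u,c)]" by (simp add: ul_def)

lemma red_ul: "red w \<Longrightarrow> u \<in> V \<Longrightarrow> a \<in> carrier (C u) \<Longrightarrow> \<not> tm u w \<Longrightarrow> red (w @ ul u a)"
  using red_snoc by (cases "a = \<one>\<^bsub>C u\<^esub>") (auto simp: ul_def)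

lemma peq_word: "peq E a b \<Longrightarrow> a \<in> W \<Longrightarrow> b \<in> W"
  using peq_set W_iff by metis

lemma decomp:
  assumes r: "red r" and u: "u \<in> V"
  shows "\<exists>p c. peq E r (p @ ul u c) \<and> \<not> tm u p \<and> c \<in> carrier (C u)"
proof (cases "tm u r")
  case True
  then obtain p c where pc: "peq E r (p@[(u,c)])" unfolding tm_def by blast
  have "(u,c) \<in> set r" using peq_set[OF pc] by simp
  then have c: "c \<in> carrier (C u)" "c \<noteq> \<one>\<^bsub>C u\<^esub>" using r unfolding red_def W_iff by auto
  have nt: "\<not> tm u p"
  proof
    assume "tm u p"
    then obtain q e where qe: "peq E p (q@[(u,e)])" unfolding tm_def by blast
    have "peq E (p@[(u,c)]) ((q@[(u,e)])@[(u,c)])" using peq_app[OF qe peq_refl] .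
    then have "peq E r (q@[(u,e),(u,c)])" using pc peq_trans by simp
    moreover have "bad (q@[(u,e),(u,c)])" using bad_append[of q "[(u,e),(u,c)]"] by simp
    ultimately show False using r unfolding red_def by blast
  qed
  show ?thesis using pc c nt by (intro exI[of _ p] exI[of _ c]) (simp add: ul_ne)
next
  case False
  then show ?thesis using monoid.one_closed[OF mon[OF u]]
    by (intro exI[of _ r] exI[of _ "\<one>\<^bsub>C u\<^esub>"]) simp
qed

lemma act_D:
  assumes pc: "peq E r (p @ ul u c)" and nt: "\<not> tm u p" and c: "c \<in> carrier (C u)"
    and a: "a \<in> carrier (C u)" and u: "u \<in> V"
  shows "peq E (act r (u,a)) (p @ ul u (c \<otimes>\<^bsub>C u\<^esub> a))"
proof (cases "c = \<one>\<^bsub>C u\<^esub>")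
  case True
  then have rp: "peq E r p" using pc by simp
  then have "\<not> tm u r" using nt tm_peq peq_sym by blast
  then have "act r (u,a) = r @ ul u a" unfolding act_def by simp
  moreover have "c \<otimes>\<^bsub>C u\<^esub> a = a" using True monoid.l_one[OF mon[OF u] a] by simp
  ultimately show ?thesis using rp peq_app peq_refl by metis
next
  case False
  then have pc1: "peq E r (p @ [(u,c)])" using pc by (simp add: ul_ne)
  then have t: "tm u r" unfolding tm_def by blast
  define pc0 where "pc0 = (SOME pc. peq E r (fst pc @ [(u, snd pc)]))"
  have "\<exists>pc. peq E r (fst pc @ [(u, snd pc)])" using pc1 by (intro exI[of _ "(p,c)"]) simp
  then have h0: "peq E r (fst pc0 @ [(u, snd pc0)])" unfolding pc0_def by (rule someI_ex)
  have "peq E (p@[(u,c)]) (fst pc0 @ [(u, snd pc0)])" using pc1 h0 peq_sym peq_trans by blast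
  from uniq[OF this] have e: "c = snd pc0" "peq E p (fst pc0)" by auto
  have "act r (u,a) = fst pc0 @ ul u (snd pc0 \<otimes>\<^bsub>C u\<^esub> a)" unfolding act_def pc0_def using t by (simp add: Let_def)
  then show ?thesis using e peq_app peq_refl peq_sym by metis
qed

lemma act_red:
  assumes r: "red r" and u: "u \<in> V" and a: "a \<in> carrier (C u)"
  shows "red (act r (u,a))"
proof -
  obtain p c where pc: "peq E r (p @ ul u c)" "\<not> tm u p" "c \<in> carrier (C u)" using decomp[OF r u] by blast
  have "red (p @ ul u c)" using red_peq[OF r pc(1)] .
  then have rp: "red p" by (rule red_prefix)
  have ca: "c \<otimes>\<^bsub>C u\<^esub> a \<in> carrier (C u)" using monoid.m_closed[OF mon[OF u] pc(3) a] .
  have "red (p @ ul u (c \<otimes>\<^bsub>C u\<^esub> a))" using red_ul[OF rp u ca pc(2)] .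
  then show ?thesis using red_peq act_D[OF pc a u] peq_sym by blast
qed

lemma act_peq:
  assumes r: "red r" and rr: "peq E r r'" and u: "u \<in> V" and a: "a \<in> carrier (C u)"
  shows "peq E (act r (u,a)) (act r' (u,a))"
proof -
  obtain p c where pc: "peq E r (p @ ul u c)" "\<not> tm u p" "c \<in> carrier (C u)" using decomp[OF r u] by blast
  have pc': "peq E r' (p @ ul u c)" using pc(1) rr peq_sym peq_trans by blast
  show ?thesis using act_D[OF pc a u] act_D[OF pc' pc(2,3) a u] peq_sym peq_trans by blast
qed

lemma act_one:
  assumes r: "red r" and u: "u \<in> V"
  shows "peq E (act r (u, \<one>\<^bsub>C u\<^esub>)) r"
proof -
  obtain p c where pc: "peq E r (p @ ul u c)" "\<not> tm u p" "c \<in> carrier (C u)" using decomp[OF r u] by blast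
  have "peq E (act r (u, \<one>\<^bsub>C u\<^esub>)) (p @ ul u (c \<otimes>\<^bsub>C u\<^esub> \<one>\<^bsub>C u\<^esub>))"
    using act_D[OF pc monoid.one_closed[OF mon[OF u]] u] .
  moreover have "c \<otimes>\<^bsub>C u\<^esub> \<one>\<^bsub>C u\<^esub> = c" using monoid.r_one[OF mon[OF u] pc(3)] .
  ultimately show ?thesis using pc(1) peq_sym peq_trans by metis
qed

lemma act_mult:
  assumes r: "red r" and u: "u \<in> V" and a: "a \<in> carrier (C u)" and b: "b \<in> carrier (C u)"
  shows "peq E (act (act r (u,a)) (u,b)) (act r (u, a \<otimes>\<^bsub>C u\<^esub> b))"
proof -
  obtain p c where pc: "peq E r (p @ ul u c)" "\<not> tm u p" "c \<in> carrier (C u)" using decomp[OF r u] by blast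
  have ca: "c \<otimes>\<^bsub>C u\<^esub> a \<in> carrier (C u)" using monoid.m_closed[OF mon[OF u] pc(3) a] .
  have 1: "peq E (act r (u,a)) (p @ ul u (c \<otimes>\<^bsub>C u\<^esub> a))" using act_D[OF pc a u] .
  have 2: "peq E (act (act r (u,a)) (u,b)) (p @ ul u ((c \<otimes>\<^bsub>C u\<^esub> a) \<otimes>\<^bsub>C u\<^esub> b))"
    using act_D[OF 1 pc(2) ca b u] .
  have ab: "a \<otimes>\<^bsub>C u\<^esub> b \<in> carrier (C u)" using monoid.m_closed[OF mon[OF u] a b] .
  have 3: "peq E (act r (u,a \<otimes>\<^bsub>C u\<^esub> b)) (p @ ul u (c \<otimes>\<^bsub>C u\<^esub> (a \<otimes>\<^bsub>C u\<^esub> b)))"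
    using act_D[OF pc ab u] .
  have "(c \<otimes>\<^bsub>C u\<^esub> a) \<otimes>\<^bsub>C u\<^esub> b = c \<otimes>\<^bsub>C u\<^esub> (a \<otimes>\<^bsub>C u\<^esub> b)"
    using monoid.m_assoc[OF mon[OF u] pc(3) a b] .
  then show ?thesis using 2 3 peq_sym peq_trans by metis
qed

lemma NT:
  assumes nt: "\<not> tm u s" and e: "E u w"
  shows "\<not> tm u (s @ ul w d)"
proof (cases "d = \<one>\<^bsub>C w\<^esub>")
  case True then show ?thesis using nt by simp
next
  case False
  show ?thesis
  proof
    assume "tm u (s @ ul w d)"
    then obtain q f where h: "peq E (s@[(w,d)]) (q@[(u,f)])" using False unfolding tm_def by (auto simp: ul_ne)
    from last_analysis[OF irr sy h] obtain A B where
      z: "q@[(u,f)] = A@[(w,d)]@B" and bb: "\<forall>y\<in>set B. E (fst (w,d)) (fst y)" and pp: "peq E s (A@B)" by blast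
    have uw: "u \<noteq> w" using e irr by auto
    have "B \<noteq> []" using z uw by auto
    then have "last B = (u,f)"
    proof -
      have "last (q@[(u,f)]) = last ((A@[(w,d)])@B)" using z by simp
      then show ?thesis using \<open>B \<noteq> []\<close> by simp
    qed
    then have "B = butlast B @ [(u,f)]" using \<open>B \<noteq> []\<close> by (metis append_butlast_last_id)
    then have "peq E s ((A @ butlast B) @ [(u,f)])" using pp by (metis append_assoc)
    then show False using nt unfolding tm_def by blast
  qed
qed

lemma commute:
  assumes e: "E u w"
  shows "peq E (s @ ul u c @ ul w d) (s @ ul w d @ ul u c)"
proof (cases "c = \<one>\<^bsub>C u\<^esub> \<or> d = \<one>\<^bsub>C w\<^esub>")
  case True then show ?thesis by auto
next
  case False
  then have "ul u c = [(u,c)]" "ul w d = [(w,d)]" by (auto simp: ul_ne)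
  moreover have "\<forall>y\<in>set [(w,d)]. E (fst (u,c)) (fst y)" using e by simp
  note peq_mv[OF irr sy this, of s]
  then have "peq E (s @ [(u,c)] @ [(w,d)]) (s @ [(w,d)] @ [(u,c)])" by simp
  ultimately show ?thesis by simp
qed

end



context gpc begin

lemma tm_ext:
  assumes h: "peq E p (q @ [(u,f)] @ ul w d)" and e: "E u w"
  shows "tm u p"
proof (cases "d = \<one>\<^bsub>C w\<^esub>")
  case True then show ?thesis using h unfolding tm_def by auto
next
  case False
  have "\<forall>y\<in>set [(w,d)]. E (fst (u,f)) (fst y)" using e by simp
  note peq_mv[OF irr sy this, of q]
  moreover have "peq E p (q @ [(u,f)] @ [(w,d)])" using h False by (simp add: ul_ne)
  ultimately have "peq E p (q @ [(w,d)] @ [(u,f)])" using peq_trans by blast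
  then have "peq E p ((q @ [(w,d)]) @ [(u,f)])" by simp
  then show ?thesis unfolding tm_def by blast
qed

lemma act_comm:
  assumes r: "red r" and u: "u \<in> V" and w: "w \<in> V" and e: "E u w"
    and a: "a \<in> carrier (C u)" and b: "b \<in> carrier (C w)"
  shows "peq E (act (act r (u,a)) (w,b)) (act (act r (w,b)) (u,a))"
proof -
  obtain p c where pc: "peq E r (p @ ul u c)" "\<not> tm u p" "c \<in> carrier (C u)" using decomp[OF r u] by blast
  have rp: "red p" using red_prefix red_peq[OF r pc(1)] by blast
  obtain s d where sd: "peq E p (s @ ul w d)" "\<not> tm w s" "d \<in> carrier (C w)" using decomp[OF rp w] by blast
  have ntu: "\<not> tm u s"
  proof
    assume "tm u s"
    then obtain q f where qf: "peq E s (q@[(u,f)])" unfolding tm_def by blast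
    have "peq E p ((q@[(u,f)]) @ ul w d)" using sd(1) peq_app[OF qf peq_refl] peq_trans by blast
    then have "tm u p" using tm_ext[OF _ e] by simp
    then show False using pc(2) by blast
  qed
  have ew: "E w u" using sy e .
  have r1: "peq E r ((s @ ul w d) @ ul u c)" using pc(1) peq_app[OF sd(1) peq_refl] peq_trans by blast
  have "peq E ((s @ ul w d) @ ul u c) ((s @ ul u c) @ ul w d)" using peq_sym[OF commute[OF e, of s c d]] by simp
  then have r2: "peq E r ((s @ ul u c) @ ul w d)" using r1 peq_trans by blast
  have ca: "c \<otimes>\<^bsub>C u\<^esub> a \<in> carrier (C u)" using monoid.m_closed[OF mon[OF u] pc(3) a] .
  have db: "d \<otimes>\<^bsub>C w\<^esub> b \<in> carrier (C w)" using monoid.m_closed[OF mon[OF w] sd(3) b] .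
  have A1: "peq E (act r (u,a)) ((s @ ul w d) @ ul u (c \<otimes>\<^bsub>C u\<^esub> a))"
    using act_D[OF r1 NT[OF ntu e] pc(3) a u] .
  have A1': "peq E (act r (u,a)) ((s @ ul u (c \<otimes>\<^bsub>C u\<^esub> a)) @ ul w d)"
  proof -
    have "peq E ((s @ ul w d) @ ul u (c \<otimes>\<^bsub>C u\<^esub> a)) ((s @ ul u (c \<otimes>\<^bsub>C u\<^esub> a)) @ ul w d)"
      using peq_sym[OF commute[OF e, of s "c \<otimes>\<^bsub>C u\<^esub> a" d]] by simp
    then show ?thesis using A1 peq_trans by blast
  qed
  have A2: "peq E (act (act r (u,a)) (w,b)) ((s @ ul u (c \<otimes>\<^bsub>C u\<^esub> a)) @ ul w (d \<otimes>\<^bsub>C w\<^esub> b))"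
    using act_D[OF A1' NT[OF sd(2) ew] sd(3) b w] .
  have B1: "peq E (act r (w,b)) ((s @ ul u c) @ ul w (d \<otimes>\<^bsub>C w\<^esub> b))"
    using act_D[OF r2 NT[OF sd(2) ew] sd(3) b w] .
  have B1': "peq E (act r (w,b)) ((s @ ul w (d \<otimes>\<^bsub>C w\<^esub> b)) @ ul u c)"
  proof -
    have "peq E ((s @ ul u c) @ ul w (d \<otimes>\<^bsub>C w\<^esub> b)) ((s @ ul w (d \<otimes>\<^bsub>C w\<^esub> b)) @ ul u c)"
      using commute[OF e, of s c "d \<otimes>\<^bsub>C w\<^esub> b"] by simp
    then show ?thesis using B1 peq_trans by blast
  qed
  have B2: "peq E (act (act r (w,b)) (u,a)) ((s @ ul w (d \<otimes>\<^bsub>C w\<^esub> b)) @ ul u (c \<otimes>\<^bsub>C u\<^esub> a))"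
    using act_D[OF B1' NT[OF ntu e] pc(3) a u] .
  have "peq E ((s @ ul u (c \<otimes>\<^bsub>C u\<^esub> a)) @ ul w (d \<otimes>\<^bsub>C w\<^esub> b)) ((s @ ul w (d \<otimes>\<^bsub>C w\<^esub> b)) @ ul u (c \<otimes>\<^bsub>C u\<^esub> a))"
    using commute[OF e, of s "c \<otimes>\<^bsub>C u\<^esub> a" "d \<otimes>\<^bsub>C w\<^esub> b"] by simp
  then show ?thesis using A2 B2 peq_trans peq_sym by blast
qed

definition run :: "('v \<times> 'a) list \<Rightarrow> ('v \<times> 'a) list \<Rightarrow> ('v \<times> 'a) list" where
  "run r w = foldl act r w"

lemma run_Nil[simp]: "run r [] = r" by (simp add: run_def)
lemma run_Cons[simp]: "run r (x#w) = run (act r x) w" by (simp add: run_def)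
lemma run_app: "run r (a@b) = run (run r a) b" by (simp add: run_def)

lemma run_red: "red r \<Longrightarrow> w \<in> W \<Longrightarrow> red (run r w)"
proof (induction w arbitrary: r)
  case Nil then show ?case by simp
next
  case (Cons x w)
  obtain u a where x: "x = (u,a)" by (cases x)
  have "red (act r (u,a))" using act_red Cons.prems x by simp
  then show ?case using Cons x by simp
qed

lemma run_peq: "red r \<Longrightarrow> peq E r r' \<Longrightarrow> w \<in> W \<Longrightarrow> peq E (run r w) (run r' w)"
proof (induction w arbitrary: r r')
  case Nil then show ?case by simp
next
  case (Cons x w)
  obtain u a where x: "x = (u,a)" by (cases x)
  have 1: "peq E (act r (u,a)) (act r' (u,a))" using act_peq Cons.prems x by simp
  have 2: "red (act r (u,a))" using act_red Cons.prems x by simp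
  show ?case using Cons.IH[OF 2 1] Cons.prems x by simp
qed

lemma run_R: "R w w' \<Longrightarrow> red r \<Longrightarrow> peq E (run r w) (run r w')"
proof (induction arbitrary: r rule: gp_rel.induct)
  case (gp_one v) then show ?case using act_one[OF gp_one.prems gp_one.hyps] by simp
next
  case (gp_mult v a b) then show ?case using act_mult[OF gp_mult.prems gp_mult.hyps] by simp
next
  case (gp_comm u v a b) then show ?case using act_comm[OF gp_comm.prems gp_comm.hyps] by simp
next
  case (gp_refl w) then show ?case by simp
next
  case (gp_sym w w') then show ?case using peq_sym by blast
next
  case (gp_trans w w' w'') then show ?case using peq_trans by blast
next
  case (gp_ctxt w w' xs ys)
  have r1: "red (run r xs)" using run_red gp_ctxt by blast
  have "peq E (run (run r xs) w) (run (run r xs) w')" using gp_ctxt.IH[OF r1] .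
  moreover have "red (run (run r xs) w)" using run_red[OF r1] R_words[OF gp_ctxt.hyps(1)] by blast
  ultimately have "peq E (run (run (run r xs) w) ys) (run (run (run r xs) w') ys)"
    using run_peq gp_ctxt.hyps by blast
  then show ?case by (simp add: run_app)
qed

lemma red_Nil[simp]: "red []"
proof -
  have "\<forall>z::('v \<times> 'a) list. peq E [] z \<longrightarrow> \<not> bad z"
  proof (intro allI impI)
    fix z :: "('v \<times> 'a) list" assume "peq E [] z" then have "z = []" by (rule peq_Nil)
    then show "\<not> bad z" by simp
  qed
  then show ?thesis unfolding red_def by simp
qed

lemma run_self: "red w \<Longrightarrow> peq E (run [] w) w"
proof (induction w rule: rev_induct)
  case Nil then show ?case by simp
next
  case (snoc x w)
  obtain u a where x: "x = (u,a)" by (cases x)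
  have rw: "red w" using red_prefix snoc.prems by blast
  have ih: "peq E (run [] w) w" using snoc.IH rw .
  have "w@[x] \<in> W" "\<forall>y\<in>set (w@[x]). snd y \<noteq> \<one>\<^bsub>C (fst y)\<^esub>" using snoc.prems unfolding red_def by auto
  then have xw: "u \<in> V" "a \<in> carrier (C u)" "a \<noteq> \<one>\<^bsub>C u\<^esub>" "w \<in> W"
    using x by (auto simp: W_iff)
  have nt: "\<not> tm u w"
  proof
    assume "tm u w"
    then obtain p c where pc: "peq E w (p@[(u,c)])" unfolding tm_def by blast
    have "peq E (w@[x]) ((p@[(u,c)])@[x])" using peq_app[OF pc peq_refl] .
    moreover have "bad ((p@[(u,c)])@[x])" using bad_append[of "p@[(u,c)]" "[x]"] x by simp
    ultimately show False using snoc.prems unfolding red_def by blast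
  qed
  have "red (run [] w)" using run_red[OF red_Nil xw(4)] .
  then have 1: "peq E (act (run [] w) (u,a)) (act w (u,a))"
    using act_peq[OF _ ih xw(1,2)] by blast
  have "peq E w (w @ ul u \<one>\<^bsub>C u\<^esub>)" by simp
  from act_D[OF this nt monoid.one_closed[OF mon[OF xw(1)]] xw(2) xw(1)]
  have "peq E (act w (u,a)) (w @ ul u (\<one>\<^bsub>C u\<^esub> \<otimes>\<^bsub>C u\<^esub> a))" .
  moreover have "\<one>\<^bsub>C u\<^esub> \<otimes>\<^bsub>C u\<^esub> a = a" using monoid.l_one[OF mon[OF xw(1)] xw(2)] .
  ultimately have "peq E (act w (u,a)) (w @ [x])" using xw(3) x by (simp add: ul_ne)
  then have "peq E (act (run [] w) (u,a)) (w@[x])" using 1 peq_trans by blast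
  moreover have "run [] (w@[x]) = act (run [] w) (u,a)" using x by (simp add: run_app)
  ultimately show ?case by simp
qed

end



context gpc begin

lemma R_ul: "u \<in> V \<Longrightarrow> c \<in> carrier (C u) \<Longrightarrow> R [(u,c)] (ul u c)"
proof (cases "c = \<one>\<^bsub>C u\<^esub>")
  case True
  assume "u \<in> V" then show ?thesis using True gp_rel.gp_one[of u V E C] by simp
next
  case False
  assume "u \<in> V" "c \<in> carrier (C u)"
  then show ?thesis using False R_refl by (simp add: ul_ne)
qed

lemma red_W: "red r \<Longrightarrow> r \<in> W" unfolding red_def by blast

lemma R_act:
  assumes r: "red r" and u: "u \<in> V" and a: "a \<in> carrier (C u)"
  shows "R (r@[(u,a)]) (act r (u,a))"
proof (cases "tm u r")
  case True
  define pc0 where "pc0 = (SOME pc. peq E r (fst pc @ [(u, snd pc)]))"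
  obtain p c where "peq E r (p@[(u,c)])" using True unfolding tm_def by blast
  then have "\<exists>pc. peq E r (fst pc @ [(u, snd pc)])" by (intro exI[of _ "(p,c)"]) simp
  then have h0: "peq E r (fst pc0 @ [(u, snd pc0)])" unfolding pc0_def by (rule someI_ex)
  have ac: "act r (u,a) = fst pc0 @ ul u (snd pc0 \<otimes>\<^bsub>C u\<^esub> a)" unfolding act_def pc0_def using True by (simp add: Let_def)
  have w0: "fst pc0 @ [(u, snd pc0)] \<in> W" using peq_word[OF h0 red_W[OF r]] .
  then have c0: "snd pc0 \<in> carrier (C u)" "fst pc0 \<in> W" by auto
  have 1: "R r (fst pc0 @ [(u, snd pc0)])" using peq_R[OF h0 red_W[OF r] w0] .
  have 2: "R (r@[(u,a)]) ((fst pc0 @ [(u, snd pc0)])@[(u,a)])" using R_right[OF 1] u a by simp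
  have "R [(u, snd pc0),(u,a)] [(u, snd pc0 \<otimes>\<^bsub>C u\<^esub> a)]" using gp_rel.gp_mult[where v=u and a="snd pc0" and b=a] u c0(1) a by blast
  moreover have "R [(u, snd pc0 \<otimes>\<^bsub>C u\<^esub> a)] (ul u (snd pc0 \<otimes>\<^bsub>C u\<^esub> a))"
    using R_ul[OF u monoid.m_closed[OF mon[OF u] c0(1) a]] .
  ultimately have "R [(u, snd pc0),(u,a)] (ul u (snd pc0 \<otimes>\<^bsub>C u\<^esub> a))" by (rule R_trans)
  then have "R (fst pc0 @ [(u, snd pc0),(u,a)]) (fst pc0 @ ul u (snd pc0 \<otimes>\<^bsub>C u\<^esub> a))" using R_left c0(2) by blast
  then show ?thesis using 2 ac R_trans by simp
next
  case False
  then have "act r (u,a) = r @ ul u a" unfolding act_def by simp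
  then show ?thesis using R_left[OF R_ul[OF u a] red_W[OF r]] by simp
qed

lemma R_run: "red r \<Longrightarrow> w \<in> W \<Longrightarrow> R (r@w) (run r w)"
proof (induction w arbitrary: r)
  case Nil then show ?case using R_refl red_W by simp
next
  case (Cons x w)
  obtain u a where x: "x = (u,a)" by (cases x)
  have ua: "u \<in> V" "a \<in> carrier (C u)" "w \<in> W" using Cons.prems x by auto
  have 1: "R (r@[(u,a)]) (act r (u,a))" using R_act[OF Cons.prems(1) ua(1,2)] .
  have "R ((r@[(u,a)])@w) (act r (u,a) @ w)" using R_right[OF 1 ua(3)] .
  moreover have "R (act r (u,a) @ w) (run (act r (u,a)) w)" using Cons.IH act_red Cons.prems ua by blast
  ultimately show ?case using x R_trans by simp
qed

abbreviation cls where "cls \<equiv> gp_class V E C"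
abbreviation G where "G \<equiv> graph_product V E C"

lemma cls_eq: assumes w': "w' \<in> W" shows "cls w = cls w' \<longleftrightarrow> R w w'"
proof
  assume "cls w = cls w'"
  moreover have "w' \<in> cls w'" using R_refl[OF w'] unfolding gp_class_def by simp
  ultimately show "R w w'" unfolding gp_class_def by (metis mem_Collect_eq)
next
  assume "R w w'"
  then show "cls w = cls w'" unfolding gp_class_def using R_sym R_trans by blast
qed

lemma carrier_G: "carrier G = cls ` W" unfolding graph_product_def by simp

lemma mult_G: assumes w: "w \<in> W" "w' \<in> W" shows "cls w \<otimes>\<^bsub>G\<^esub> cls w' = cls (w@w')"
proof -
  have A: "(\<Union>x\<in>cls w. \<Union>y\<in>cls w'. cls (x @ y)) \<subseteq> cls (w@w')"
  proof
    fix z assume "z \<in> (\<Union>x\<in>cls w. \<Union>y\<in>cls w'. cls (x @ y))"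
    then obtain x y where "R w x" "R w' y" "R (x@y) z" unfolding gp_class_def by auto
    then have "R (w@w') z" using R_app R_trans by blast
    then show "z \<in> cls (w@w')" unfolding gp_class_def by simp
  qed
  have B: "cls (w@w') \<subseteq> (\<Union>x\<in>cls w. \<Union>y\<in>cls w'. cls (x @ y))"
  proof
    fix z assume "z \<in> cls (w@w')"
    moreover have "w \<in> cls w" "w' \<in> cls w'" using w R_refl unfolding gp_class_def by auto
    ultimately show "z \<in> (\<Union>x\<in>cls w. \<Union>y\<in>cls w'. cls (x @ y))" by blast
  qed
  have "cls w \<otimes>\<^bsub>G\<^esub> cls w' = (\<Union>x\<in>cls w. \<Union>y\<in>cls w'. cls (x @ y))"
    unfolding graph_product_def by simp
  then show ?thesis using A B by simp
qed

lemma one_G: "\<one>\<^bsub>G\<^esub> = cls []" unfolding graph_product_def by simp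

end



locale gpv = gpc V E C for V :: "'v set" and E and C :: "'v \<Rightarrow> ('a, 'm) monoid_scheme" +
  fixes v :: 'v
  assumes v: "v \<in> V"
begin

abbreviation D where "D \<equiv> C v"
definition io :: "'a \<Rightarrow> ('v \<times> 'a) list set" where "io d = cls [(v,d)]"
definition Y where "Y = {cls p | p. red p \<and> \<not> tm v p}"

lemma monD: "monoid D" using mon[OF v] .

lemma phi_cls: "p \<in> W \<Longrightarrow> d \<in> carrier D \<Longrightarrow> cls p \<otimes>\<^bsub>G\<^esub> io d = cls (p@[(v,d)])"
  unfolding io_def using mult_G v by simp

lemma F1:
  assumes Z: "Z \<in> carrier G"
  shows "\<exists>p d. red p \<and> \<not> tm v p \<and> d \<in> carrier D \<and> Z = cls (p@[(v,d)])"
proof -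
  obtain w where w: "w \<in> W" "Z = cls w" using Z carrier_G by auto
  define r where "r = run [] w"
  have rr: "red r" unfolding r_def using run_red[OF red_Nil w(1)] .
  have wr: "R w r" unfolding r_def using R_run[OF red_Nil w(1)] by simp
  obtain p c where pc: "peq E r (p @ ul v c)" "\<not> tm v p" "c \<in> carrier D" using decomp[OF rr v] by blast
  have rp: "red (p @ ul v c)" using red_peq[OF rr pc(1)] .
  then have rp': "red p" by (rule red_prefix)
  have "R r (p @ ul v c)" using peq_R[OF pc(1) red_W[OF rr] red_W[OF rp]] .
  moreover have "R (p @ [(v,c)]) (p @ ul v c)" using R_left[OF R_ul[OF v pc(3)] red_W[OF rp']] .
  ultimately have "R w (p @ [(v,c)])" using wr R_trans R_sym by blast
  then have "Z = cls (p@[(v,c)])" using w cls_eq R_words by blast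
  then show ?thesis using rp' pc by blast
qed

lemma F2:
  assumes p: "red p" "\<not> tm v p" and p': "red p'" "\<not> tm v p'"
    and d: "d \<in> carrier D" and d': "d' \<in> carrier D"
    and eq: "cls (p@[(v,d)]) = cls (p'@[(v,d')])"
  shows "cls p = cls p' \<and> d = d'"
proof -
  have r1: "red (p @ ul v d)" using red_ul[OF p(1) v d p(2)] .
  have r2: "red (p' @ ul v d')" using red_ul[OF p'(1) v d' p'(2)] .
  have "R (p@[(v,d)]) (p'@[(v,d')])" using eq cls_eq[of "p'@[(v,d')]"] red_W[OF p'(1)] v d' by simp
  moreover have "R (p@[(v,d)]) (p @ ul v d)" using R_left[OF R_ul[OF v d] red_W[OF p(1)]] .
  moreover have "R (p'@[(v,d')]) (p' @ ul v d')" using R_left[OF R_ul[OF v d'] red_W[OF p'(1)]] .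
  ultimately have "R (p @ ul v d) (p' @ ul v d')" using R_trans R_sym by blast
  then have "peq E (run [] (p @ ul v d)) (run [] (p' @ ul v d'))" using run_R red_Nil by blast
  then have pq: "peq E (p @ ul v d) (p' @ ul v d')"
    using run_self[OF r1] run_self[OF r2] peq_trans peq_sym by blast
  show ?thesis
  proof (cases "d = \<one>\<^bsub>D\<^esub>"; cases "d' = \<one>\<^bsub>D\<^esub>")
    assume "d = \<one>\<^bsub>D\<^esub>" "d' = \<one>\<^bsub>D\<^esub>"
    then show ?thesis using pq peq_R red_W p p' cls_eq by simp
  next
    assume a: "d = \<one>\<^bsub>D\<^esub>" "d' \<noteq> \<one>\<^bsub>D\<^esub>"
    then have "peq E p (p' @ [(v,d')])" using pq by (simp add: ul_ne)
    then show ?thesis using p(2) unfolding tm_def by blast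
  next
    assume a: "d \<noteq> \<one>\<^bsub>D\<^esub>" "d' = \<one>\<^bsub>D\<^esub>"
    then have "peq E p' (p @ [(v,d)])" using pq peq_sym by (simp add: ul_ne)
    then show ?thesis using p'(2) unfolding tm_def by blast
  next
    assume a: "d \<noteq> \<one>\<^bsub>D\<^esub>" "d' \<noteq> \<one>\<^bsub>D\<^esub>"
    then have "peq E (p @ [(v,d)]) (p' @ [(v,d')])" using pq by (simp add: ul_ne)
    from uniq[OF this] have "d = d'" "peq E p p'" by auto
    then show ?thesis using peq_R red_W p p' cls_eq by simp
  qed
qed

end



context gpv begin

lemma Y_cls: "y \<in> Y \<longleftrightarrow> (\<exists>p. y = cls p \<and> red p \<and> \<not> tm v p)" unfolding Y_def by blast

definition dec where
  "dec Z = (SOME pd. red (fst pd) \<and> \<not> tm v (fst pd) \<and> snd pd \<in> carrier D \<and> Z = cls (fst pd @ [(v, snd pd)]))"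
definition yZ where "yZ Z = cls (fst (dec Z))"
definition dZ where "dZ Z = snd (dec Z)"

lemma dec_spec: assumes "Z \<in> carrier G"
  shows "red (fst (dec Z)) \<and> \<not> tm v (fst (dec Z)) \<and> snd (dec Z) \<in> carrier D \<and> Z = cls (fst (dec Z) @ [(v, snd (dec Z))])"
proof -
  obtain p d where "red p \<and> \<not> tm v p \<and> d \<in> carrier D \<and> Z = cls (p@[(v,d)])" using F1[OF assms] by blast
  then have "\<exists>pd. red (fst pd) \<and> \<not> tm v (fst pd) \<and> snd pd \<in> carrier D \<and> Z = cls (fst pd @ [(v, snd pd)])"
    by (intro exI[of _ "(p,d)"]) simp
  then show ?thesis unfolding dec_def by (rule someI_ex)
qed

lemma dec1: assumes Z: "Z \<in> carrier G"
  shows "yZ Z \<in> Y" "dZ Z \<in> carrier D" "Z = yZ Z \<otimes>\<^bsub>G\<^esub> io (dZ Z)"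
proof -
  note s = dec_spec[OF Z]
  show "yZ Z \<in> Y" unfolding yZ_def Y_def using s by blast
  show "dZ Z \<in> carrier D" unfolding dZ_def using s by blast
  show "Z = yZ Z \<otimes>\<^bsub>G\<^esub> io (dZ Z)" unfolding yZ_def dZ_def using s phi_cls red_W by metis
qed

lemma phi_carrier: "y \<in> Y \<Longrightarrow> d \<in> carrier D \<Longrightarrow> y \<otimes>\<^bsub>G\<^esub> io d \<in> carrier G"
proof -
  assume y: "y \<in> Y" and d: "d \<in> carrier D"
  then obtain p where p: "y = cls p" "red p" "\<not> tm v p" unfolding Y_def by blast
  have "p@[(v,d)] \<in> W" using red_W[OF p(2)] v d by simp
  then show ?thesis using phi_cls[OF red_W[OF p(2)] d] p carrier_G by simp
qed

lemma dec2: assumes y: "y \<in> Y" and d: "d \<in> carrier D"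
  shows "yZ (y \<otimes>\<^bsub>G\<^esub> io d) = y" "dZ (y \<otimes>\<^bsub>G\<^esub> io d) = d"
proof -
  obtain p where p: "y = cls p" "red p" "\<not> tm v p" using y unfolding Y_def by blast
  let ?Z = "y \<otimes>\<^bsub>G\<^esub> io d"
  have Zc: "?Z \<in> carrier G" using phi_carrier[OF y d] .
  have Zp: "?Z = cls (p@[(v,d)])" using phi_cls[OF red_W[OF p(2)] d] p by simp
  note s = dec_spec[OF Zc]
  have "cls (fst (dec ?Z)) = cls p \<and> snd (dec ?Z) = d"
    using F2[of "fst (dec ?Z)" p "snd (dec ?Z)" d] s p d Zp by metis
  then show "yZ ?Z = y" "dZ ?Z = d" unfolding yZ_def dZ_def using p by auto
qed

lemma mulio: assumes y: "y \<in> Y" and d: "d \<in> carrier D" and a: "a \<in> carrier D"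
  shows "(y \<otimes>\<^bsub>G\<^esub> io d) \<otimes>\<^bsub>G\<^esub> io a = y \<otimes>\<^bsub>G\<^esub> io (d \<otimes>\<^bsub>D\<^esub> a)"
proof -
  obtain p where p: "y = cls p" "red p" "\<not> tm v p" using y unfolding Y_def by blast
  have pw: "p \<in> W" using red_W[OF p(2)] .
  have da: "d \<otimes>\<^bsub>D\<^esub> a \<in> carrier D" using monoid.m_closed[OF monD d a] .
  have "(y \<otimes>\<^bsub>G\<^esub> io d) \<otimes>\<^bsub>G\<^esub> io a = cls ((p@[(v,d)])@[(v,a)])"
    using phi_cls[OF pw d] phi_cls[of "p@[(v,d)]" a] pw v d a p(1) by simp
  also have "\<dots> = cls (p@[(v,d \<otimes>\<^bsub>D\<^esub> a)])"
  proof -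
    have "R [(v,d),(v,a)] [(v,d \<otimes>\<^bsub>D\<^esub> a)]" using gp_rel.gp_mult[where v=v and a=d and b=a] v d a by blast
    then have "R (p@[(v,d),(v,a)]) (p@[(v,d \<otimes>\<^bsub>D\<^esub> a)])" using R_left pw by blast
    then show ?thesis using cls_eq[of "p@[(v,d \<otimes>\<^bsub>D\<^esub> a)]"] pw v da by simp
  qed
  also have "\<dots> = y \<otimes>\<^bsub>G\<^esub> io (d \<otimes>\<^bsub>D\<^esub> a)" using phi_cls[OF pw da] p(1) by simp
  finally show ?thesis .
qed

lemma Y_ne: "cls [] \<in> Y"
proof -
  have "\<not> tm v []" unfolding tm_def using peq_Nil by fastforce
  then show ?thesis unfolding Y_def using red_Nil by blast
qed

end



locale gpr = gpv V E C v for V :: "'v set" and E and C :: "'v \<Rightarrow> ('a, 'm) monoid_scheme" and v +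
  assumes rc: "right_cancellative (C v)"
begin

definition Psi :: "('a \<rightharpoonup> 'a) \<Rightarrow> (('v \<times> 'a) list set \<rightharpoonup> ('v \<times> 'a) list set)" where
  "Psi f = (\<lambda>Z. if Z \<in> carrier G then (case f (dZ Z) of None \<Rightarrow> None | Some e \<Rightarrow> Some (yZ Z \<otimes>\<^bsub>G\<^esub> io e)) else None)"

definition good :: "('a \<rightharpoonup> 'a) \<Rightarrow> bool" where
  "good f \<longleftrightarrow> (\<forall>x y. f x = Some y \<longrightarrow> x \<in> carrier D \<and> y \<in> carrier D)"

lemma rcD: "x \<in> carrier D \<Longrightarrow> y \<in> carrier D \<Longrightarrow> a \<in> carrier D \<Longrightarrow> x \<otimes>\<^bsub>D\<^esub> a = y \<otimes>\<^bsub>D\<^esub> a \<Longrightarrow> x = y"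
  using rc unfolding right_cancellative_def by blast

lemma the_div: assumes "x \<in> carrier D" "a \<in> carrier D" "x \<otimes>\<^bsub>D\<^esub> a = z"
  shows "(THE x. x \<in> carrier D \<and> x \<otimes>\<^bsub>D\<^esub> a = z) = x"
  using assms rcD by blast

lemma good_pmult: "good f \<Longrightarrow> good g \<Longrightarrow> good (pmult f g)"
  unfolding good_def pmult_def map_comp_def by (auto split: option.splits)

lemma good_pid: "good (pid D)" unfolding good_def pid_def by auto
lemma good_rho: "a \<in> carrier D \<Longrightarrow> good (rho D a)"
  unfolding good_def rho_def using monoid.m_closed[OF monD] by auto
lemma good_rho_inv: assumes a: "a \<in> carrier D" shows "good (rho_inv D a)"
  unfolding good_def
proof (intro allI impI)
  fix x y assume h: "rho_inv D a x = Some y"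
  then obtain x0 where x0: "x0 \<in> carrier D" "x0 \<otimes>\<^bsub>D\<^esub> a = x" unfolding rho_inv_def by (auto split: if_splits)
  have "rho_inv D a x = Some x0" unfolding rho_inv_def using x0 the_div[OF x0(1) a x0(2)] by auto
  then have "y = x0" using h by simp
  then show "x \<in> carrier D \<and> y \<in> carrier D" using x0 monoid.m_closed[OF monD x0(1) a] by auto
qed

lemma IH_good: "f \<in> IH D \<Longrightarrow> good f"
  by (induction rule: IH.induct) (auto intro: good_pmult good_pid good_rho good_rho_inv)

lemma Psi_hom: assumes f: "good f" and g: "good g"
  shows "Psi (pmult f g) = pmult (Psi f) (Psi g)"
proof
  fix Z
  show "Psi (pmult f g) Z = pmult (Psi f) (Psi g) Z"
  proof (cases "Z \<in> carrier G")
    case False then show ?thesis unfolding Psi_def pmult_def map_comp_def by simp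
  next
    case True
    note s = dec1[OF True]
    show ?thesis
    proof (cases "f (dZ Z)")
      case None then show ?thesis using True unfolding Psi_def pmult_def map_comp_def by simp
    next
      case (Some e)
      then have e: "e \<in> carrier D" using f unfolding good_def by blast
      let ?Z' = "yZ Z \<otimes>\<^bsub>G\<^esub> io e"
      have Z': "?Z' \<in> carrier G" "yZ ?Z' = yZ Z" "dZ ?Z' = e"
        using phi_carrier[OF s(1) e] dec2[OF s(1) e] by auto
      have "pmult (Psi f) (Psi g) Z = Psi g ?Z'"
        using True Some unfolding Psi_def pmult_def map_comp_def by simp
      also have "\<dots> = (case g (dZ ?Z') of None \<Rightarrow> None | Some e' \<Rightarrow> Some (yZ ?Z' \<otimes>\<^bsub>G\<^esub> io e'))"
        using Z'(1) unfolding Psi_def by simp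
      also have "\<dots> = (case g e of None \<Rightarrow> None | Some e' \<Rightarrow> Some (yZ Z \<otimes>\<^bsub>G\<^esub> io e'))"
        by (simp only: Z'(2) Z'(3))
      also have "\<dots> = Psi (pmult f g) Z" using True Some unfolding Psi_def pmult_def map_comp_def by simp
      finally show ?thesis by simp
    qed
  qed
qed

lemma Psi_pid: "Psi (pid D) = pid G"
proof
  fix Z show "Psi (pid D) Z = pid G Z"
    using dec1[of Z] unfolding Psi_def pid_def by auto
qed

lemma Psi_empty: "Psi Map.empty = Map.empty"
  unfolding Psi_def by auto

lemma io_carrier: "a \<in> carrier D \<Longrightarrow> io a \<in> carrier G"
proof -
  assume "a \<in> carrier D"
  then have "[(v,a)] \<in> W" using v by simp
  then show ?thesis unfolding io_def using carrier_G by simp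
qed

lemma Psi_rho: assumes a: "a \<in> carrier D" shows "Psi (rho D a) = rho G (io a)"
proof
  fix Z show "Psi (rho D a) Z = rho G (io a) Z"
  proof (cases "Z \<in> carrier G")
    case False then show ?thesis unfolding Psi_def rho_def by simp
  next
    case True
    note s = dec1[OF True]
    have "Psi (rho D a) Z = Some (yZ Z \<otimes>\<^bsub>G\<^esub> io (dZ Z \<otimes>\<^bsub>D\<^esub> a))"
      using True s unfolding Psi_def rho_def by simp
    also have "\<dots> = Some (Z \<otimes>\<^bsub>G\<^esub> io a)" using mulio[OF s(1) s(2) a] s(3) by simp
    also have "\<dots> = rho G (io a) Z" using True unfolding rho_def by simp
    finally show ?thesis .
  qed
qed

lemma mult_io_carrier: "X \<in> carrier G \<Longrightarrow> a \<in> carrier D \<Longrightarrow> X \<otimes>\<^bsub>G\<^esub> io a \<in> carrier G"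
proof -
  assume X: "X \<in> carrier G" and a: "a \<in> carrier D"
  note s = dec1[OF X]
  have "X \<otimes>\<^bsub>G\<^esub> io a = yZ X \<otimes>\<^bsub>G\<^esub> io (dZ X \<otimes>\<^bsub>D\<^esub> a)" using mulio[OF s(1) s(2) a] s(3) by simp
  then show ?thesis using phi_carrier[OF s(1) monoid.m_closed[OF monD s(2) a]] by simp
qed

lemma Psi_rho_inv: assumes a: "a \<in> carrier D" shows "Psi (rho_inv D a) = rho_inv G (io a)"
proof
  fix Z show "Psi (rho_inv D a) Z = rho_inv G (io a) Z"
  proof (cases "Z \<in> carrier G")
    case False
    then have "\<not> (\<exists>X\<in>carrier G. X \<otimes>\<^bsub>G\<^esub> io a = Z)" using mult_io_carrier a by blast
    then show ?thesis using False unfolding Psi_def rho_inv_def by simp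
  next
    case True
    note s = dec1[OF True]
    let ?y = "yZ Z" and ?d = "dZ Z"
    have key: "\<And>X. X \<in> carrier G \<Longrightarrow> X \<otimes>\<^bsub>G\<^esub> io a = Z \<longleftrightarrow> (\<exists>x\<in>carrier D. x \<otimes>\<^bsub>D\<^esub> a = ?d \<and> X = ?y \<otimes>\<^bsub>G\<^esub> io x)"
    proof
      fix X assume X: "X \<in> carrier G" "X \<otimes>\<^bsub>G\<^esub> io a = Z"
      note t = dec1[OF X(1)]
      have da: "dZ X \<otimes>\<^bsub>D\<^esub> a \<in> carrier D" using monoid.m_closed[OF monD t(2) a] .
      have "Z = yZ X \<otimes>\<^bsub>G\<^esub> io (dZ X \<otimes>\<^bsub>D\<^esub> a)" using mulio[OF t(1) t(2) a] t(3) X(2) by simp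
      then have "?y = yZ X" "?d = dZ X \<otimes>\<^bsub>D\<^esub> a" using dec2[OF t(1) da] by auto
      then show "\<exists>x\<in>carrier D. x \<otimes>\<^bsub>D\<^esub> a = ?d \<and> X = ?y \<otimes>\<^bsub>G\<^esub> io x" using t by auto
    next
      fix X assume "\<exists>x\<in>carrier D. x \<otimes>\<^bsub>D\<^esub> a = ?d \<and> X = ?y \<otimes>\<^bsub>G\<^esub> io x"
      then obtain x where x: "x \<in> carrier D" "x \<otimes>\<^bsub>D\<^esub> a = ?d" "X = ?y \<otimes>\<^bsub>G\<^esub> io x" by blast
      then show "X \<otimes>\<^bsub>G\<^esub> io a = Z" using mulio[OF s(1) x(1) a] s(3) by simp
    qed
    show ?thesis
    proof (cases "\<exists>x\<in>carrier D. x \<otimes>\<^bsub>D\<^esub> a = ?d")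
      case False
      then have "\<not> (\<exists>X\<in>carrier G. X \<otimes>\<^bsub>G\<^esub> io a = Z)" using key by blast
      then show ?thesis using True False unfolding Psi_def rho_inv_def by simp
    next
      case True2: True
      then obtain x where x: "x \<in> carrier D" "x \<otimes>\<^bsub>D\<^esub> a = ?d" by blast
      have t1: "(THE x. x \<in> carrier D \<and> x \<otimes>\<^bsub>D\<^esub> a = ?d) = x" using the_div[OF x(1) a x(2)] .
      have Xc: "?y \<otimes>\<^bsub>G\<^esub> io x \<in> carrier G" using phi_carrier[OF s(1) x(1)] .
      have ex: "\<exists>X\<in>carrier G. X \<otimes>\<^bsub>G\<^esub> io a = Z" using key[OF Xc] x Xc by blast
      have t2: "(THE X. X \<in> carrier G \<and> X \<otimes>\<^bsub>G\<^esub> io a = Z) = ?y \<otimes>\<^bsub>G\<^esub> io x"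
      proof (rule the_equality)
        show "?y \<otimes>\<^bsub>G\<^esub> io x \<in> carrier G \<and> ?y \<otimes>\<^bsub>G\<^esub> io x \<otimes>\<^bsub>G\<^esub> io a = Z" using key[OF Xc] x Xc by blast
      next
        fix X assume "X \<in> carrier G \<and> X \<otimes>\<^bsub>G\<^esub> io a = Z"
        then obtain x' where "x' \<in> carrier D" "x' \<otimes>\<^bsub>D\<^esub> a = ?d" "X = ?y \<otimes>\<^bsub>G\<^esub> io x'" using key by blast
        then show "X = ?y \<otimes>\<^bsub>G\<^esub> io x" using rcD[OF _ x(1) a] x(2) by metis
      qed
      have "Psi (rho_inv D a) Z = Some (?y \<otimes>\<^bsub>G\<^esub> io x)"
        using \<open>Z \<in> carrier G\<close> True2 t1 unfolding Psi_def rho_inv_def by simp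
      also have "\<dots> = rho_inv G (io a) Z" using ex t2 unfolding rho_inv_def by simp
      finally show ?thesis .
    qed
  qed
qed

lemma Psi_IH: "f \<in> IH D \<Longrightarrow> Psi f \<in> IH G"
proof (induction rule: IH.induct)
  case IH_one then show ?case using Psi_pid IH.IH_one by metis
next
  case (IH_rho f a)
  have "Psi (pmult f (rho D a)) = pmult (Psi f) (rho G (io a))"
    using Psi_hom[OF IH_good[OF IH_rho.hyps(1)] good_rho[OF IH_rho.hyps(2)]] Psi_rho[OF IH_rho.hyps(2)] by simp
  then show ?case using IH.IH_rho[OF IH_rho.IH io_carrier[OF IH_rho.hyps(2)]] by simp
next
  case (IH_rho_inv f a)
  have "Psi (pmult f (rho_inv D a)) = pmult (Psi f) (rho_inv G (io a))"
    using Psi_hom[OF IH_good[OF IH_rho_inv.hyps(1)] good_rho_inv[OF IH_rho_inv.hyps(2)]] Psi_rho_inv[OF IH_rho_inv.hyps(2)] by simp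
  then show ?case using IH.IH_rho_inv[OF IH_rho_inv.IH io_carrier[OF IH_rho_inv.hyps(2)]] by simp
qed

lemma Psi_inj: assumes f: "good f" and g: "good g" and eq: "Psi f = Psi g" shows "f = g"
proof
  fix x show "f x = g x"
  proof (cases "x \<in> carrier D")
    case False then show ?thesis using f g unfolding good_def by (metis option.exhaust)
  next
    case True
    let ?Z = "cls [] \<otimes>\<^bsub>G\<^esub> io x"
    have Z: "?Z \<in> carrier G" "yZ ?Z = cls []" "dZ ?Z = x" using phi_carrier[OF Y_ne True] dec2[OF Y_ne True] by auto
    have "\<And>k. Psi k ?Z = (case k (dZ ?Z) of None \<Rightarrow> None | Some e \<Rightarrow> Some (yZ ?Z \<otimes>\<^bsub>G\<^esub> io e))"
      using Z(1) unfolding Psi_def by simp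
    then have "\<And>k. Psi k ?Z = (case k x of None \<Rightarrow> None | Some e \<Rightarrow> Some (cls [] \<otimes>\<^bsub>G\<^esub> io e))"
      by (simp only: Z(2) Z(3))
    then have h: "(case f x of None \<Rightarrow> None | Some e \<Rightarrow> Some (cls [] \<otimes>\<^bsub>G\<^esub> io e)) =
                  (case g x of None \<Rightarrow> None | Some e \<Rightarrow> Some (cls [] \<otimes>\<^bsub>G\<^esub> io e))"
      using eq by metis
    show ?thesis
    proof (cases "f x"; cases "g x")
      fix e e' assume fe: "f x = Some e" and ge: "g x = Some e'"
      have "e \<in> carrier D" "e' \<in> carrier D" using fe ge f g unfolding good_def by blast+
      moreover have "cls [] \<otimes>\<^bsub>G\<^esub> io e = cls [] \<otimes>\<^bsub>G\<^esub> io e'" using h fe ge by simp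
      ultimately have "e = e'" using dec2(2)[OF Y_ne] by metis
      then show ?thesis using fe ge by simp
    qed (use h in auto)
  qed
qed

end


theorem proposition2p8:
  fixes V :: "'v set" and E :: "'v \<Rightarrow> 'v \<Rightarrow> bool"
    and C :: "'v \<Rightarrow> 'a monoid" and v :: 'v
  assumes irrefl: "\<And>u. \<not> E u u"
    and sym: "\<And>u w. E u w \<Longrightarrow> E w u"
    and LCM: "\<And>u. u \<in> V \<Longrightarrow> left_LCM_monoid (C u)"
    and v: "v \<in> V"
  shows "\<exists>h. h \<in> hom (IH0 (C v)) (IH0 (graph_product V E C))
            \<and> h \<one>\<^bsub>IH0 (C v)\<^esub> = \<one>\<^bsub>IH0 (graph_product V E C)\<^esub>
            \<and> inj_on h (carrier (IH0 (C v)))"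
proof -
  have m: "\<And>u. u \<in> V \<Longrightarrow> monoid (C u)" using LCM unfolding left_LCM_monoid_def by blast
  have rc: "right_cancellative (C v)" using LCM[OF v] unfolding left_LCM_monoid_def by blast
  interpret gpr V E C v
    by (rule gpr.intro[OF gpv.intro[OF gpc.intro[OF irrefl sym m] gpv_axioms.intro[OF v]] gpr_axioms.intro[of C v, OF rc]])
  have gc: "\<And>f. f \<in> carrier (IH0 (C v)) \<Longrightarrow> good f"
  proof -
    fix f assume "f \<in> carrier (IH0 (C v))"
    then have "f \<in> IH (C v) \<or> f = Map.empty" unfolding IH0_def by auto
    then show "good f"
    proof
      assume "f \<in> IH (C v)" then show "good f" by (rule IH_good)
    next
      assume "f = Map.empty" then show "good f" unfolding good_def by simp
    qed
  qed
  have car: "\<And>f. f \<in> carrier (IH0 (C v)) \<Longrightarrow> Psi f \<in> carrier (IH0 (graph_product V E C))"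
  proof -
    fix f assume "f \<in> carrier (IH0 (C v))"
    then have "f \<in> IH (C v) \<or> f = Map.empty" unfolding IH0_def by auto
    then show "Psi f \<in> carrier (IH0 (graph_product V E C))"
    proof
      assume "f \<in> IH (C v)" then show ?thesis using Psi_IH unfolding IH0_def by simp
    next
      assume "f = Map.empty" then show ?thesis using Psi_empty unfolding IH0_def by simp
    qed
  qed
  have "Psi \<in> hom (IH0 (C v)) (IH0 (graph_product V E C))"
    unfolding hom_def
  proof (intro CollectI conjI ballI)
    show "Psi \<in> carrier (IH0 (C v)) \<rightarrow> carrier (IH0 (graph_product V E C))" using car by blast
  next
    fix x y assume "x \<in> carrier (IH0 (C v))" "y \<in> carrier (IH0 (C v))"
    then have "good x" "good y" using gc by auto
    then show "Psi (x \<otimes>\<^bsub>IH0 (C v)\<^esub> y) = Psi x \<otimes>\<^bsub>IH0 (graph_product V E C)\<^esub> Psi y"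
      using Psi_hom unfolding IH0_def by simp
  qed
  moreover have "Psi \<one>\<^bsub>IH0 (C v)\<^esub> = \<one>\<^bsub>IH0 (graph_product V E C)\<^esub>"
    using Psi_pid unfolding IH0_def by simp
  moreover have "inj_on Psi (carrier (IH0 (C v)))"
    using Psi_inj gc unfolding inj_on_def by blast
  ultimately show ?thesis by blast
qed

end
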